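(* Let $A\in\mathbb{R}^{n\times n}$, $B\in\mathbb{R}^n$ with $(A,B)$ controllable, $n\ge2$, and let $\mathrm{an}_k\in\mathbb{R}^{(n-k)\times(n-k+1)}$, $k=1,\dots,n-1$, be full row rank matrices with $\mathrm{an}_kB_{k-1}=0$, where $B_0=B$ and $B_k=\mathrm{an}_k\cdots\mathrm{an}_1A^kB$. Put $A_{t,i}=\mathrm{an}_i\cdots\mathrm{an}_1A^i$ ($i=1,\dots,n-1$). Let $\Phi(s)=s^n+p_1s^{n-1}+\dots+p_{n-1}s+p_n$ be a real polynomial and define $$K_0=p_nI_n,\qquad K_i=\mathrm{an}_iK_{i-1}+p_{n-i}A_{t,i}\quad(i=1,\dots,n-1),\qquad K_n=K_{n-1}+A_{t,n-1}A .$$ Then $B_{n-1}=A_{t,n-1}B\neq0$ and the row vector $K=\frac{1}{B_{n-1}}K_n$ satisfies $\det(sI-A+BK)=\Phi(s)$. *)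

theory Defs
  imports "Jordan_Normal_Form.Char_Poly" "Jordan_Normal_Form.DL_Rank"
begin

definition mrank :: "real mat \<Rightarrow> nat" where
  "mrank M = vec_space.rank (dim_row M) M"

definition ctrb_mat :: "nat \<Rightarrow> real mat \<Rightarrow> real mat \<Rightarrow> real mat" where
  "ctrb_mat n A B = mat n n (\<lambda>(i,j). ((A ^\<^sub>m j) * B) $$ (i, 0))"

definition controllable :: "nat \<Rightarrow> real mat \<Rightarrow> real mat \<Rightarrow> bool" where
  "controllable n A B \<longleftrightarrow> mrank (ctrb_mat n A B) = n"

fun an_prod :: "nat \<Rightarrow> (nat \<Rightarrow> real mat) \<Rightarrow> nat \<Rightarrow> real mat" where
  "an_prod n an 0 = 1\<^sub>m n"
| "an_prod n an (Suc k) = an (Suc k) * an_prod n an k"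

definition Bk :: "nat \<Rightarrow> real mat \<Rightarrow> real mat \<Rightarrow> (nat \<Rightarrow> real mat) \<Rightarrow> nat \<Rightarrow> real mat" where
  "Bk n A B an k = an_prod n an k * (A ^\<^sub>m k) * B"

definition At :: "nat \<Rightarrow> real mat \<Rightarrow> (nat \<Rightarrow> real mat) \<Rightarrow> nat \<Rightarrow> real mat" where
  "At n A an i = an_prod n an i * (A ^\<^sub>m i)"

fun Kseq :: "nat \<Rightarrow> real mat \<Rightarrow> (nat \<Rightarrow> real mat) \<Rightarrow> (nat \<Rightarrow> real) \<Rightarrow> nat \<Rightarrow> real mat" where
  "Kseq n A an p 0 = p n \<cdot>\<^sub>m 1\<^sub>m n"
| "Kseq n A an p (Suc i) = an (Suc i) * Kseq n A an p i + p (n - Suc i) \<cdot>\<^sub>m At n A an (Suc i)"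

definition Kn :: "nat \<Rightarrow> real mat \<Rightarrow> (nat \<Rightarrow> real mat) \<Rightarrow> (nat \<Rightarrow> real) \<Rightarrow> real mat" where
  "Kn n A an p = Kseq n A an p (n - 1) + At n A an (n - 1) * A"

definition Phi :: "nat \<Rightarrow> (nat \<Rightarrow> real) \<Rightarrow> real poly" where
  "Phi n p = monom 1 n + (\<Sum>i = 1..n. monom (p i) (n - i))"

end

theory Submission
  imports Defs
begin



lemma fullrow_left_null:
  fixes M :: "real mat"
  assumes M: "M \<in> carrier_mat r c" and rk: "vec_space.rank r M = r"
    and z: "z \<in> carrier_vec r" and zM: "transpose_mat M *\<^sub>v z = 0\<^sub>v c"
  shows "z = 0\<^sub>v r"
proof -
  interpret V: vec_space "TYPE(real)" r .
  have li0: "V.lin_indpt {}"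
    by (metis (no_types) empty_subsetI V.fin_dim V.finite_basis_exists V.subset_li_is_li vec_vs vectorspace.basis_def)
  obtain S where S: "finite S" "maximal S (\<lambda>T. T \<subseteq> set (cols M) \<and> V.lin_indpt T)"
    using maximal_exists_superset[of "set (cols M)" "\<lambda>T. T \<subseteq> set (cols M) \<and> V.lin_indpt T" "{}"] li0
    by auto
  have cardS: "card S = r" using V.rank_card_indpt[OF M S(2)] rk by simp
  have Ssub: "S \<subseteq> set (cols M)" and Sli: "V.lin_indpt S" using S(2) unfolding maximal_def by auto
  obtain L where L: "set L = S" "distinct L" using S(1) finite_distinct_list by blast
  have lenL: "length L = r" using L cardS distinct_card by fastforce
  have Lc: "set L \<subseteq> carrier_vec r" using L Ssub M cols_dim by blast
  define Q where "Q = mat_of_cols r L"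
  have Q: "Q \<in> carrier_mat r r" unfolding Q_def using lenL mat_of_cols_carrier(1) by metis
  have cQ: "cols Q = L" unfolding Q_def using Lc by simp
  have "V.rank Q = r" using V.lin_indpt_full_rank[OF Q] cQ L Sli by simp
  hence dQ: "det Q \<noteq> 0" using V.det_rank_iff[OF Q] by simp
  have QT: "transpose_mat Q \<in> carrier_mat r r" using Q by simp
  have "det (transpose_mat Q) \<noteq> 0" using dQ det_transpose[OF Q] by simp
  moreover have "transpose_mat Q *\<^sub>v z = 0\<^sub>v r"
  proof (rule eq_vecI)
    fix j assume j: "j < dim_vec (0\<^sub>v r :: real vec)"
    hence j': "j < r" by simp
    have "L ! j \<in> set (cols M)" using L Ssub j' lenL nth_mem by blast
    then obtain i where i: "i < c" "L ! j = col M i" using M by (auto simp: cols_def in_set_conv_nth)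
    have "(transpose_mat Q *\<^sub>v z) $ j = col Q j \<bullet> z" using Q j' by simp
    also have "col Q j = L ! j" unfolding Q_def using lenL j' Lc by (intro col_mat_of_cols) (auto simp: nth_mem subset_iff)
    also have "L ! j \<bullet> z = (transpose_mat M *\<^sub>v z) $ i" using M i by simp
    finally show "(transpose_mat Q *\<^sub>v z) $ j = 0\<^sub>v r $ j" using zM i j' by (simp add: i)
  qed (use Q in auto)
  ultimately show ?thesis using det_0_iff_vec_prod_zero_field[OF QT] z by blast
qed




definition compm :: "nat \<Rightarrow> (nat \<Rightarrow> real) \<Rightarrow> real mat" where
  "compm n p = mat n n (\<lambda>(i,l). if i < n - 1 then (if l = Suc i then 1 else 0) else - p (n - l))"

lemma char_poly_compm:
  assumes n: "n \<ge> 1"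
  shows "char_poly (compm n p) = Phi n p"
proof -
  define x :: "real poly" where "x = [:0,1:]"
  define M where "M = char_poly_matrix (compm n p)"
  have Mc: "M \<in> carrier_mat n n" unfolding M_def compm_def by simp
  have Mij: "M $$ (i,l) = (if i = l then x else 0) + (if i < n - 1 then (if l = Suc i then -1 else 0) else [:p (n - l):])"
    if "i < n" "l < n" for i l
    using that unfolding M_def compm_def char_poly_matrix_def x_def by auto
  define U where "U = mat n n (\<lambda>(i,j). if j = 0 then x ^ i else if i = j then 1 else (0::real poly))"
  have Uc: "U \<in> carrier_mat n n" unfolding U_def by simp
  have detU: "det U = 1"
  proof -
    have "det U = prod_list (diag_mat U)"
      by (rule det_lower_triangular[OF _ Uc]) (auto simp: U_def)
    also have "diag_mat U = replicate n 1" unfolding diag_mat_def U_def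
      by (rule nth_equalityI) auto
    finally show ?thesis by simp
  qed
  define N where "N = M * U"
  have Nc: "N \<in> carrier_mat n n" unfolding N_def using Mc Uc by simp
  have detN: "det N = det M" unfolding N_def using det_mult[OF Mc Uc] detU by simp
  have Nj: "N $$ (i,j) = M $$ (i,j)" if "i < n" "j < n" "j \<noteq> 0" for i j
  proof -
    have "N $$ (i,j) = (\<Sum>l<n. M $$ (i,l) * U $$ (l,j))"
      unfolding N_def using that Mc Uc by (simp add: scalar_prod_def lessThan_atLeast0)
    also have "\<dots> = (\<Sum>l<n. if l = j then M $$ (i,l) else 0)"
      by (rule sum.cong) (auto simp: U_def that)
    finally show ?thesis using that by simp
  qed
  have N0: "N $$ (i,0) = (\<Sum>l<n. M $$ (i,l) * x ^ l)" if "i < n" for i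
    unfolding N_def using that Mc Uc n by (simp add: scalar_prod_def lessThan_atLeast0 U_def)
  have N0a: "N $$ (i,0) = 0" if "i < n - 1" for i
  proof -
    have "N $$ (i,0) = (\<Sum>l<n. M $$ (i,l) * x ^ l)" using that by (intro N0) simp
    also have "\<dots> = (\<Sum>l<n. (if l = i then x * x ^ l else 0) + (if l = Suc i then - (x ^ l) else 0))"
      using that by (intro sum.cong) (auto simp: Mij)
    also have "\<dots> = x * x ^ i - x ^ Suc i" using that by (simp add: sum.distrib)
    finally show ?thesis by simp
  qed
  have N0b: "N $$ (n - 1, 0) = Phi n p"
  proof -
    have "N $$ (n-1,0) = (\<Sum>l<n. M $$ (n-1,l) * x ^ l)" using n by (intro N0) simp
    also have "\<dots> = (\<Sum>l<n. (if l = n - 1 then x * x ^ l else 0) + [:p (n - l):] * x ^ l)"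
      using n by (intro sum.cong) (auto simp: Mij algebra_simps)
    also have "\<dots> = x ^ n + (\<Sum>l<n. [:p (n - l):] * x ^ l)"
      using n by (simp add: sum.distrib power_Suc[symmetric] del: power_Suc)
    also have "(\<Sum>l<n. [:p (n - l):] * x ^ l) = (\<Sum>i = 1..n. monom (p i) (n - i))"
      by (rule sum.reindex_bij_witness[of _ "\<lambda>i. n - i" "\<lambda>l. n - l"])
         (auto simp: monom_altdef x_def)
    finally show ?thesis unfolding Phi_def x_def by (simp add: monom_altdef)
  qed
  have "det N = (\<Sum>i<n. N $$ (i,0) * cofactor N i 0)"
    using laplace_expansion_column[OF Nc] n by simp
  also have "\<dots> = N $$ (n-1,0) * cofactor N (n-1) 0"
  proof -
    have "(\<Sum>i<n. N $$ (i,0) * cofactor N i 0) = (\<Sum>i<n. if i = n - 1 then N $$ (i,0) * cofactor N i 0 else 0)"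
      by (rule sum.cong) (auto simp: N0a)
    thus ?thesis using n by simp
  qed
  also have "cofactor N (n-1) 0 = 1"
  proof -
    define D where "D = mat_delete N (n-1) 0"
    have Dc: "D \<in> carrier_mat (n-1) (n-1)" unfolding D_def using mat_delete_carrier[OF Nc] .
    have Dij: "D $$ (i,j) = M $$ (i, Suc j)" if "i < n - 1" "j < n - 1" for i j
      unfolding D_def mat_delete_def using that Nc by (auto simp: Nj)
    have "det D = prod_list (diag_mat D)"
      by (rule det_lower_triangular[OF _ Dc]) (auto simp: Dij Mij)
    also have "diag_mat D = replicate (n-1) (-1)" unfolding diag_mat_def
      using Dc by (intro nth_equalityI) (auto simp: Dij Mij)
    finally have "det D = (-1) ^ (n-1)" by simp
    thus ?thesis unfolding cofactor_def D_def by (simp flip: power_add)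
  qed
  finally show ?thesis using N0b detN unfolding char_poly_def M_def by simp
qed




lemma pow_add_mat: assumes A: "A \<in> carrier_mat n n"
  shows "A ^\<^sub>m (i + j) = A ^\<^sub>m i * A ^\<^sub>m j"
proof (induction j)
  case 0 thus ?case using A by simp
next
  case (Suc j)
  have "A ^\<^sub>m (i + Suc j) = A ^\<^sub>m (i + j) * A" by simp
  also have "\<dots> = A ^\<^sub>m i * A ^\<^sub>m j * A" using Suc by simp
  also have "\<dots> = A ^\<^sub>m i * (A ^\<^sub>m j * A)" using A by (intro assoc_mult_mat) auto
  finally show ?case by simp
qed

lemma rows_mult: assumes R: "\<And>i. i < r \<Longrightarrow> R i \<in> carrier_mat 1 n" and X: "X \<in> carrier_mat n m"
  and i: "i < r" and j: "j < m"
  shows "(mat r n (\<lambda>(i,k). R i $$ (0,k)) * X) $$ (i,j) = (R i * X) $$ (0,j)"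
  using R[OF i] X i j by (simp add: scalar_prod_def)

fun Sf :: "nat \<Rightarrow> real mat \<Rightarrow> (nat \<Rightarrow> real) \<Rightarrow> nat \<Rightarrow> real mat" where
  "Sf n A p 0 = p n \<cdot>\<^sub>m 1\<^sub>m n"
| "Sf n A p (Suc i) = Sf n A p i + p (n - Suc i) \<cdot>\<^sub>m (A ^\<^sub>m Suc i)"

locale ack =
  fixes n :: nat and A B :: "real mat" and an :: "nat \<Rightarrow> real mat" and p :: "nat \<Rightarrow> real"
  assumes n2: "n \<ge> 2" and A: "A \<in> carrier_mat n n" and B: "B \<in> carrier_mat n 1"
    and ctr: "controllable n A B"
    and anc: "\<And>k. 1 \<le> k \<Longrightarrow> k \<le> n - 1 \<Longrightarrow> an k \<in> carrier_mat (n - k) (n - k + 1)"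
    and anr: "\<And>k. 1 \<le> k \<Longrightarrow> k \<le> n - 1 \<Longrightarrow> mrank (an k) = n - k"
    and an0: "\<And>k. 1 \<le> k \<Longrightarrow> k \<le> n - 1 \<Longrightarrow> an k * Bk n A B an (k - 1) = 0\<^sub>m (n - k) 1"
begin

abbreviation "T \<equiv> an_prod n an"

lemma anc': "Suc k \<le> n - 1 \<Longrightarrow> an (Suc k) \<in> carrier_mat (n - Suc k) (n - k)"
proof -
  assume h: "Suc k \<le> n - 1"
  have "n - Suc k + 1 = n - k" using h by simp
  thus ?thesis using anc[of "Suc k"] h by simp
qed

lemma Tc: "k \<le> n - 1 \<Longrightarrow> T k \<in> carrier_mat (n - k) n"
proof (induction k)
  case 0 thus ?case by simp
next
  case (Suc k)
  thus ?case using anc'[OF Suc.prems] by simp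
qed

lemma Ap: "A ^\<^sub>m j \<in> carrier_mat n n" using A by simp

lemma TAB0: "k \<le> n - 1 \<Longrightarrow> j < k \<Longrightarrow> T k * A ^\<^sub>m j * B = 0\<^sub>m (n - k) 1"
proof (induction k arbitrary: j)
  case 0 thus ?case by simp
next
  case (Suc k)
  have a: "an (Suc k) \<in> carrier_mat (n - Suc k) (n - k)" using anc'[OF Suc.prems(1)] .
  have t: "T k \<in> carrier_mat (n - k) n" using Tc Suc.prems by simp
  have "T (Suc k) * A ^\<^sub>m j * B = an (Suc k) * (T k * A ^\<^sub>m j * B)"
  proof -
    have ta: "T k * A ^\<^sub>m j \<in> carrier_mat (n - k) n" using t Ap by simp
    have "T (Suc k) * A ^\<^sub>m j = an (Suc k) * (T k * A ^\<^sub>m j)"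
      using assoc_mult_mat[OF a t Ap] by simp
    thus ?thesis using assoc_mult_mat[OF a ta B] by simp
  qed
  moreover have "T k * A ^\<^sub>m j * B = (if j < k then 0\<^sub>m (n - k) 1 else Bk n A B an k)"
  proof (cases "j < k")
    case False
    hence "j = k" using Suc.prems by simp
    thus ?thesis using Bk_def[of n A B an k] by simp
  qed (use Suc in auto)
  moreover have "an (Suc k) * Bk n A B an k = 0\<^sub>m (n - Suc k) 1" using an0[of "Suc k"] Suc.prems by simp
  ultimately show ?case using a by (auto simp: right_mult_zero_mat)
qed

lemma Tnull: "k \<le> n - 1 \<Longrightarrow> z \<in> carrier_vec (n - k) \<Longrightarrow> transpose_mat (T k) *\<^sub>v z = 0\<^sub>v n \<Longrightarrow> z = 0\<^sub>v (n - k)"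
proof (induction k arbitrary: z)
  case 0 thus ?case by simp
next
  case (Suc k)
  have a: "an (Suc k) \<in> carrier_mat (n - Suc k) (n - k)" using anc'[OF Suc.prems(1)] .
  have t: "T k \<in> carrier_mat (n - k) n" using Tc Suc.prems by simp
  have "transpose_mat (T (Suc k)) = transpose_mat (T k) * transpose_mat (an (Suc k))"
    using transpose_mult[OF a t] by simp
  hence "transpose_mat (T k) *\<^sub>v (transpose_mat (an (Suc k)) *\<^sub>v z) = 0\<^sub>v n"
    using Suc.prems a t by (metis assoc_mult_mat_vec transpose_carrier_mat)
  hence "transpose_mat (an (Suc k)) *\<^sub>v z = 0\<^sub>v (n - k)"
    using Suc.IH[of "transpose_mat (an (Suc k)) *\<^sub>v z"] Suc.prems a by auto
  moreover have "vec_space.rank (n - Suc k) (an (Suc k)) = n - Suc k"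
    using anr[of "Suc k"] Suc.prems a unfolding mrank_def by auto
  ultimately show ?case using fullrow_left_null[OF a] Suc.prems by blast
qed

end



lemma entry11: "(t :: real mat) \<in> carrier_mat 1 n \<Longrightarrow> X \<in> carrier_mat n 1 \<Longrightarrow>
  (t * X) $$ (0,0) = (\<Sum>l<n. X $$ (l,0) * t $$ (0,l))"
  by (simp add: scalar_prod_def lessThan_atLeast0 mult.commute)

context ack begin

abbreviation "t \<equiv> T (n - 1)"
definition "b = (t * A ^\<^sub>m (n-1) * B) $$ (0,0)"

lemma n1: "n - (n - 1) = 1" using n2 by simp

lemma tc: "t \<in> carrier_mat 1 n" using Tc[of "n-1"] n1 by simp

lemma tAB: "j < n - 1 \<Longrightarrow> t * A ^\<^sub>m j * B = 0\<^sub>m 1 1"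
  using TAB0[of "n-1" j] n1 by simp

lemma bnz: "b \<noteq> 0"
proof
  assume b0: "b = 0"
  define C where "C = ctrb_mat n A B"
  have Cc: "C \<in> carrier_mat n n" unfolding C_def ctrb_mat_def by simp
  have Cr: "vec_space.rank n C = n" using ctr unfolding controllable_def mrank_def C_def ctrb_mat_def by simp
  define z :: "real vec" where "z = vec 1 (\<lambda>_. 1)"
  define w where "w = transpose_mat t *\<^sub>v z"
  have wc: "w \<in> carrier_vec n" using tc unfolding w_def carrier_vec_def by auto
  have ent: "(t * A ^\<^sub>m j * B) $$ (0,0) = 0" if "j < n" for j
  proof (cases "j < n - 1")
    case True thus ?thesis using tAB[of j] by simp
  next
    case False hence "j = n - 1" using that by simp
    thus ?thesis using b0 b_def by simp
  qed
  have "transpose_mat C *\<^sub>v w = 0\<^sub>v n"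
  proof (rule eq_vecI)
    fix j assume "j < dim_vec (0\<^sub>v n :: real vec)" hence j: "j < n" by simp
    have "(transpose_mat C *\<^sub>v w) $ j = (\<Sum>l<n. (A ^\<^sub>m j * B) $$ (l,0) * t $$ (0,l))"
      using j tc Cc A B by (simp add: w_def z_def C_def ctrb_mat_def scalar_prod_def lessThan_atLeast0)
    also have "\<dots> = (t * (A ^\<^sub>m j * B)) $$ (0,0)"
      by (rule entry11[symmetric, OF tc]) (rule mult_carrier_mat[OF Ap B])
    also have "t * (A ^\<^sub>m j * B) = t * A ^\<^sub>m j * B" using assoc_mult_mat[OF tc Ap B] by simp
    finally show "(transpose_mat C *\<^sub>v w) $ j = 0\<^sub>v n $ j" using ent j by simp
  qed (use Cc in simp)
  hence "w = 0\<^sub>v n" using fullrow_left_null[OF Cc Cr wc] by simp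
  hence "z = 0\<^sub>v 1" using Tnull[of "n-1" z] n1 unfolding w_def z_def by simp
  moreover have "z $ 0 = 1" unfolding z_def by simp
  ultimately show False by simp
qed

end



lemma mult_entry: "X \<in> carrier_mat r n \<Longrightarrow> Y \<in> carrier_mat n m \<Longrightarrow> i < r \<Longrightarrow> k < m \<Longrightarrow>
  (X * Y) $$ (i,k) = (\<Sum>l<n. X $$ (i,l) * Y $$ (l,k))"
  by (simp add: scalar_prod_def lessThan_atLeast0)

lemma minus_zero_mat: "X \<in> carrier_mat r c \<Longrightarrow> X - 0\<^sub>m r c = (X :: real mat)"
  by (intro eq_matI) auto

declare pow_mat.simps(2)[simp del]

context ack begin

definition "q = (1/b) \<cdot>\<^sub>m t"

lemma qc: "q \<in> carrier_mat 1 n" unfolding q_def using tc by simp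

lemma qAB_smult: "q * A ^\<^sub>m j * B = (1/b) \<cdot>\<^sub>m (t * A ^\<^sub>m j * B)"
proof -
  have "q * A ^\<^sub>m j = (1/b) \<cdot>\<^sub>m (t * A ^\<^sub>m j)" unfolding q_def by (rule mult_smult_assoc_mat[OF tc Ap])
  moreover have "t * A ^\<^sub>m j \<in> carrier_mat 1 n" using tc Ap by simp
  ultimately show ?thesis using mult_smult_assoc_mat[OF _ B] by simp
qed

lemma qAB0: "j < n - 1 \<Longrightarrow> q * A ^\<^sub>m j * B = 0\<^sub>m 1 1"
  unfolding qAB_smult using tAB by (intro eq_matI) auto

lemma qAB1: "q * A ^\<^sub>m (n - 1) * B = 1\<^sub>m 1"
  unfolding qAB_smult using bnz unfolding b_def by (intro eq_matI) (use tc B in auto)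

lemma qAB_entry: "(q * A ^\<^sub>m m * B) $$ (0,0) = (if m < n - 1 then 0 else if m = n - 1 then 1 else (q * A ^\<^sub>m m * B) $$ (0,0))"
  using qAB0 qAB1 by auto

lemma Sfc: "Sf n A p i \<in> carrier_mat n n"
  by (induction i) (use Ap A in auto)

lemma KseqT: "i \<le> n - 1 \<Longrightarrow> Kseq n A an p i = T i * Sf n A p i"
proof (induction i)
  case 0 thus ?case by simp
next
  case (Suc i)
  have a: "an (Suc i) \<in> carrier_mat (n - Suc i) (n - i)" using anc'[OF Suc.prems] .
  have ti: "T i \<in> carrier_mat (n - i) n" using Tc Suc.prems by simp
  have ts: "T (Suc i) \<in> carrier_mat (n - Suc i) n" by (rule Tc) (use Suc.prems in simp)
  have "Kseq n A an p (Suc i) = an (Suc i) * (T i * Sf n A p i) + p (n - Suc i) \<cdot>\<^sub>m (T (Suc i) * A ^\<^sub>m Suc i)"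
    using Suc by (simp add: At_def)
  also have "an (Suc i) * (T i * Sf n A p i) = T (Suc i) * Sf n A p i"
    using assoc_mult_mat[OF a ti Sfc] by simp
  also have "p (n - Suc i) \<cdot>\<^sub>m (T (Suc i) * A ^\<^sub>m Suc i) = T (Suc i) * (p (n - Suc i) \<cdot>\<^sub>m A ^\<^sub>m Suc i)"
    using mult_smult_distrib[OF ts Ap] by simp
  also have "T (Suc i) * Sf n A p i + T (Suc i) * (p (n - Suc i) \<cdot>\<^sub>m A ^\<^sub>m Suc i)
     = T (Suc i) * (Sf n A p i + p (n - Suc i) \<cdot>\<^sub>m A ^\<^sub>m Suc i)"
    by (rule mult_add_distrib_mat[symmetric, OF ts Sfc]) (use Ap in simp)
  finally show ?case by simp
qed

definition "P = Sf n A p (n - 1) + A ^\<^sub>m n"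

lemma Pc: "P \<in> carrier_mat n n" unfolding P_def using Sfc Ap by simp

lemma Apn: "A ^\<^sub>m (n - 1) * A = A ^\<^sub>m n"
proof -
  have "A ^\<^sub>m Suc (n - 1) = A ^\<^sub>m (n - 1) * A" by (simp add: pow_mat.simps(2))
  thus ?thesis using n2 by (simp add: Suc_diff_1)
qed

lemma KnP: "Kn n A an p = t * P"
proof -
  have "Kn n A an p = t * Sf n A p (n-1) + t * A ^\<^sub>m (n-1) * A"
    unfolding Kn_def At_def using KseqT[of "n-1"] by simp
  also have "t * A ^\<^sub>m (n-1) * A = t * A ^\<^sub>m n"
    using assoc_mult_mat[OF tc Ap A] Apn by simp
  also have "t * Sf n A p (n-1) + t * A ^\<^sub>m n = t * P"
    unfolding P_def by (rule mult_add_distrib_mat[symmetric, OF tc Sfc Ap])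
  finally show ?thesis .
qed

definition "K = (1/b) \<cdot>\<^sub>m Kn n A an p"

lemma KqP: "K = q * P"
  unfolding K_def KnP q_def by (rule mult_smult_assoc_mat[symmetric, OF tc Pc])

lemma Kc: "K \<in> carrier_mat 1 n" unfolding KqP using qc Pc by simp

definition "F = A - B * K"

lemma Fc: "F \<in> carrier_mat n n" unfolding F_def using A B Kc by (intro minus_carrier_mat mult_carrier_mat)

lemma qAc: "q * A ^\<^sub>m j \<in> carrier_mat 1 n" using qc Ap by simp

lemma qAF: "q * A ^\<^sub>m j * F = q * A ^\<^sub>m Suc j - (q * A ^\<^sub>m j * B) * K"
proof -
  have BK: "B * K \<in> carrier_mat n n" using B Kc by simp
  have "q * A ^\<^sub>m j * F = q * A ^\<^sub>m j * A - q * A ^\<^sub>m j * (B * K)"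
    unfolding F_def by (rule mult_minus_distrib_mat[OF qAc A BK])
  also have "q * A ^\<^sub>m j * A = q * A ^\<^sub>m Suc j" using assoc_mult_mat[OF qc Ap A] by (simp add: pow_mat.simps(2))
  also have "q * A ^\<^sub>m j * (B * K) = (q * A ^\<^sub>m j * B) * K" using assoc_mult_mat[OF qAc B Kc] by simp
  finally show ?thesis .
qed

lemma qFF: "q * F ^\<^sub>m Suc j = q * F ^\<^sub>m j * F"
  using assoc_mult_mat[OF qc _ Fc, of "F ^\<^sub>m j"] Fc by (simp add: pow_mat.simps(2))

lemma qF: "j \<le> n - 1 \<Longrightarrow> q * F ^\<^sub>m j = q * A ^\<^sub>m j"
proof (induction j)
  case 0 thus ?case using A Fc by simp
next
  case (Suc j)
  have j: "j < n - 1" using Suc.prems by simp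
  have "q * F ^\<^sub>m Suc j = q * A ^\<^sub>m j * F" using qFF Suc by simp
  also have "\<dots> = q * A ^\<^sub>m Suc j - 0\<^sub>m 1 1 * K" unfolding qAF qAB0[OF j] ..
  also have "0\<^sub>m 1 1 * K = 0\<^sub>m 1 n" using Kc by simp
  finally have "q * F ^\<^sub>m Suc j = q * A ^\<^sub>m Suc j - 0\<^sub>m 1 n" .
  thus ?case using minus_zero_mat[OF qAc[of "Suc j"]] by (simp only:)
qed

lemma qFn: "q * F ^\<^sub>m n = q * A ^\<^sub>m n - q * P"
proof -
  have "F ^\<^sub>m n = F ^\<^sub>m Suc (n - 1)" using n2 by (simp add: Suc_diff_1)
  hence "q * F ^\<^sub>m n = q * F ^\<^sub>m (n - 1) * F" using qFF by simp
  also have "\<dots> = q * A ^\<^sub>m (n - 1) * F" using qF by simp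
  also have "\<dots> = q * A ^\<^sub>m Suc (n - 1) - 1\<^sub>m 1 * K" unfolding qAF qAB1 ..
  also have "Suc (n - 1) = n" using n2 by simp
  finally show ?thesis using left_mult_one_mat[OF Kc] KqP by simp
qed

lemma qS: "k < n \<Longrightarrow> (q * Sf n A p i) $$ (0,k) = (\<Sum>l\<le>i. p (n - l) * (q * A ^\<^sub>m l) $$ (0,k))"
proof (induction i)
  case 0
  have "q * Sf n A p 0 = p n \<cdot>\<^sub>m q" using mult_smult_distrib[OF qc one_carrier_mat, of "p n"] qc by simp
  thus ?case using 0 qc A by simp
next
  case (Suc i)
  have "q * Sf n A p (Suc i) = q * Sf n A p i + p (n - Suc i) \<cdot>\<^sub>m (q * A ^\<^sub>m Suc i)"
    using mult_add_distrib_mat[OF qc Sfc, of "p (n - Suc i) \<cdot>\<^sub>m A ^\<^sub>m Suc i"]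
      mult_smult_distrib[OF qc Ap] Ap by simp
  moreover have "dim_row (q * Sf n A p i) = 1" "dim_col (q * Sf n A p i) = n"
     "dim_row (q * A ^\<^sub>m Suc i) = 1" "dim_col (q * A ^\<^sub>m Suc i) = n"
    using qAc[of "Suc i"] qc Sfc[of i] by auto
  ultimately show ?case using Suc by simp
qed

lemma qFn_entry: "k < n \<Longrightarrow> (q * F ^\<^sub>m n) $$ (0,k) = - (\<Sum>l<n. p (n - l) * (q * A ^\<^sub>m l) $$ (0,k))"
proof -
  assume k: "k < n"
  have "q * P = q * Sf n A p (n-1) + q * A ^\<^sub>m n"
    unfolding P_def by (rule mult_add_distrib_mat[OF qc Sfc Ap])
  hence "(q * F ^\<^sub>m n) $$ (0,k) = - (q * Sf n A p (n-1)) $$ (0,k)"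
  proof -
    have d1: "q * A ^\<^sub>m n \<in> carrier_mat 1 n" and d2: "q * Sf n A p (n-1) \<in> carrier_mat 1 n"
      using qc Sfc Ap by (auto intro: mult_carrier_mat)
    have e: "dim_row (q * A ^\<^sub>m n) = 1" "dim_col (q * A ^\<^sub>m n) = n"
       "dim_row (q * Sf n A p (n-1)) = 1" "dim_col (q * Sf n A p (n-1)) = n" using d1 d2 by auto
    show ?thesis unfolding qFn \<open>q * P = _\<close> using k e by simp
  qed
  also have "{..n-1} = {..<n}" using n2 by auto
  hence "(q * Sf n A p (n-1)) $$ (0,k) = (\<Sum>l<n. p (n - l) * (q * A ^\<^sub>m l) $$ (0,k))"
    using qS[OF k, of "n-1"] by simp
  finally show ?thesis .
qed

end



declare pow_mat.simps(2)[simp del]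

context ack begin

definition "Om = mat n n (\<lambda>(i,k). (q * A ^\<^sub>m i) $$ (0,k))"

lemma Omc: "Om \<in> carrier_mat n n" unfolding Om_def by simp

lemma Om_mult: "X \<in> carrier_mat n m \<Longrightarrow> i < n \<Longrightarrow> j < m \<Longrightarrow> (Om * X) $$ (i,j) = (q * A ^\<^sub>m i * X) $$ (0,j)"
  unfolding Om_def by (rule rows_mult) (use qAc in auto)

lemma OF: "Om * F = compm n p * Om"
proof (rule eq_matI)
  fix i k assume "i < dim_row (compm n p * Om)" "k < dim_col (compm n p * Om)"
  hence i: "i < n" and k: "k < n" using Omc by (auto simp: compm_def)
  have Cc: "compm n p \<in> carrier_mat n n" unfolding compm_def by simp
  have "(Om * F) $$ (i,k) = (q * A ^\<^sub>m i * F) $$ (0,k)" using Om_mult[OF Fc i k] .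
  also have "q * A ^\<^sub>m i * F = q * F ^\<^sub>m Suc i" using qFF qF[of i] i by simp
  finally have L: "(Om * F) $$ (i,k) = (q * F ^\<^sub>m Suc i) $$ (0,k)" .
  have R: "(compm n p * Om) $$ (i,k) = (\<Sum>l<n. compm n p $$ (i,l) * Om $$ (l,k))"
    by (rule mult_entry[OF Cc Omc i k])
  show "(Om * F) $$ (i,k) = (compm n p * Om) $$ (i,k)"
  proof (cases "i < n - 1")
    case True
    have "(\<Sum>l<n. compm n p $$ (i,l) * Om $$ (l,k)) = (\<Sum>l<n. if l = Suc i then Om $$ (l,k) else 0)"
      by (rule sum.cong) (use True in \<open>auto simp: compm_def\<close>)
    also have "\<dots> = Om $$ (Suc i, k)" using True by simp
    also have "\<dots> = (q * A ^\<^sub>m Suc i) $$ (0,k)" unfolding Om_def using True k by simp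
    finally show ?thesis using L R qF[of "Suc i"] True by simp
  next
    case False
    hence "Suc i = n" using i by simp
    hence "(Om * F) $$ (i,k) = - (\<Sum>l<n. p (n - l) * (q * A ^\<^sub>m l) $$ (0,k))"
      using L qFn_entry[OF k] by simp
    also have "\<dots> = (\<Sum>l<n. compm n p $$ (i,l) * Om $$ (l,k))"
      unfolding sum_negf[symmetric]
      by (rule sum.cong) (use False i k in \<open>auto simp: compm_def Om_def\<close>)
    finally show ?thesis using R by simp
  qed
qed (use Omc Fc in \<open>auto simp: compm_def\<close>)

lemma qAB_gen: "(q * A ^\<^sub>m i * (A ^\<^sub>m j * B)) $$ (0,0) = (q * A ^\<^sub>m (i + j) * B) $$ (0,0)"
proof -
  have "q * A ^\<^sub>m i * (A ^\<^sub>m j * B) = q * A ^\<^sub>m i * A ^\<^sub>m j * B"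
    using assoc_mult_mat[OF qAc Ap B] by simp
  also have "q * A ^\<^sub>m i * A ^\<^sub>m j = q * A ^\<^sub>m (i + j)"
    using assoc_mult_mat[OF qc Ap Ap] pow_add_mat[OF A] by simp
  finally show ?thesis by simp
qed

lemma detOm: "det Om \<noteq> 0"
proof -
  define R where "R = mat n n (\<lambda>(l,j). (A ^\<^sub>m (n - 1 - j) * B) $$ (l,0))"
  have Rc: "R \<in> carrier_mat n n" unfolding R_def by simp
  have ORc: "Om * R \<in> carrier_mat n n" using Omc Rc by simp
  have ent: "(Om * R) $$ (i,j) = (q * A ^\<^sub>m (i + (n - 1 - j)) * B) $$ (0,0)" if "i < n" "j < n" for i j
  proof -
    have "(Om * R) $$ (i,j) = (q * A ^\<^sub>m i * R) $$ (0,j)" using Om_mult[OF Rc that] .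
    also have "\<dots> = (\<Sum>l<n. (q * A ^\<^sub>m i) $$ (0,l) * R $$ (l,j))"
      by (rule mult_entry[OF qAc Rc]) (use that in auto)
    also have "\<dots> = (\<Sum>l<n. (q * A ^\<^sub>m i) $$ (0,l) * (A ^\<^sub>m (n - 1 - j) * B) $$ (l,0))"
      by (rule sum.cong) (use that in \<open>auto simp: R_def\<close>)
    also have "\<dots> = (q * A ^\<^sub>m i * (A ^\<^sub>m (n - 1 - j) * B)) $$ (0,0)"
      by (rule mult_entry[symmetric, OF qAc]) (use Ap B in \<open>auto intro: mult_carrier_mat\<close>)
    finally show ?thesis using qAB_gen by simp
  qed
  have "det (Om * R) = prod_list (diag_mat (Om * R))"
  proof (rule det_lower_triangular[OF _ ORc])
    fix i j assume "i < j" "j < n"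
    hence "i + (n - 1 - j) < n - 1" by simp
    thus "(Om * R) $$ (i,j) = 0" using ent[of i j] qAB0[of "i + (n - 1 - j)"] \<open>i < j\<close> \<open>j < n\<close> by simp
  qed
  also have "diag_mat (Om * R) = replicate n 1" unfolding diag_mat_def
  proof (rule nth_equalityI)
    fix i assume "i < length (map (\<lambda>i. (Om * R) $$ (i, i)) [0..<dim_row (Om * R)])"
    hence i: "i < n" using Omc by simp
    have "i + (n - 1 - i) = n - 1" using i by simp
    thus "map (\<lambda>i. (Om * R) $$ (i, i)) [0..<dim_row (Om * R)] ! i = replicate n 1 ! i"
      using ent[OF i i] qAB1 i Omc by simp
  qed (use Omc in simp)
  finally have "det (Om * R) = 1" by simp
  thus ?thesis using det_mult[OF Omc Rc] by auto
qed

lemma char_poly_F: "char_poly F = Phi n p"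
proof -
  obtain Oi where Oi: "Om * Oi = 1\<^sub>m n" "Oi * Om = 1\<^sub>m n" "Oi \<in> carrier_mat n n"
  proof (cases "mat_inverse Om")
    case None
    thus ?thesis using mat_inverse(1)[OF Omc None, where b="()"] det_non_zero_imp_unit[OF Omc detOm, where b="()"] by blast
  next
    case (Some Oi)
    thus ?thesis using mat_inverse(2)[OF Omc Some] that by blast
  qed
  have Cc: "compm n p \<in> carrier_mat n n" unfolding compm_def by simp
  have "Oi * compm n p * Om = Oi * (compm n p * Om)" using assoc_mult_mat[OF Oi(3) Cc Omc] .
  also have "\<dots> = Oi * (Om * F)" using OF by simp
  also have "\<dots> = (Oi * Om) * F" using assoc_mult_mat[OF Oi(3) Omc Fc] by simp
  also have "\<dots> = F" using Oi(2) Fc by simp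
  finally have FF: "F = Oi * compm n p * Om" by simp
  have "similar_mat F (compm n p)"
    unfolding similar_mat_def similar_mat_wit_def Let_def
    using Fc Cc Oi Omc FF by (intro exI[of _ Oi] exI[of _ Om]) auto
  hence "char_poly F = char_poly (compm n p)" by (rule char_poly_similar)
  also have "\<dots> = Phi n p" using char_poly_compm n2 by simp
  finally show ?thesis .
qed

end

theorem mainTheorem14:
  fixes n :: nat and A B :: "real mat" and an :: "nat \<Rightarrow> real mat" and p :: "nat \<Rightarrow> real"
  assumes "n \<ge> 2"
    and "A \<in> carrier_mat n n" and "B \<in> carrier_mat n 1"
    and "controllable n A B"
    and "\<And>k. 1 \<le> k \<Longrightarrow> k \<le> n - 1 \<Longrightarrow> an k \<in> carrier_mat (n - k) (n - k + 1)"
    and "\<And>k. 1 \<le> k \<Longrightarrow> k \<le> n - 1 \<Longrightarrow> mrank (an k) = n - k"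
    and "\<And>k. 1 \<le> k \<Longrightarrow> k \<le> n - 1 \<Longrightarrow> an k * Bk n A B an (k - 1) = 0\<^sub>m (n - k) 1"
  shows "Bk n A B an (n - 1) = At n A an (n - 1) * B
         \<and> (At n A an (n - 1) * B) $$ (0, 0) \<noteq> 0
         \<and> char_poly (A - B * ((1 / (At n A an (n - 1) * B) $$ (0, 0)) \<cdot>\<^sub>m Kn n A an p)) = Phi n p"
proof -
  interpret ack n A B an p by (unfold_locales; fact assms)
  have e: "(At n A an (n - 1) * B) $$ (0, 0) = b" unfolding b_def At_def ..
  show ?thesis using bnz char_poly_F unfolding e F_def K_def by (simp add: Bk_def At_def)
qed



end
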